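(* Let $S$ be a monoid and let $A_S$ be a right $S$-act that is both noetherian and Rees artinian. Then for every $f\in\mathrm{End}(A_S)$ there exists $n\in\mathbb N$ such that $\ker f^n\oplus\mathcal K_{\mathrm{Im}f^n}=\nabla_A$, i.e. $\ker f^n\vee\mathcal K_{\mathrm{Im}f^n}=\nabla_A$ and $\ker f^n\cap\mathcal K_{\mathrm{Im}f^n}=\Delta_A$.
   Context: $\ker h=\{(a,a'):h(a)=h(a')\}$; for a subact $B$, $\mathcal K_B=(B\times B)\cup\Delta_A$ with $\Delta_A=\{(a,a):a\in A\}$; $\nabla_A=A\times A$; $\vee$ is the join of congruences. Noetherian: ascending chain condition on congruences. Rees artinian: descending chain condition on subacts. *)

theory Defs
  imports Main
begin

definition right_act :: "'a set \<Rightarrow> ('a \<Rightarrow> 'm::monoid_mult \<Rightarrow> 'a) \<Rightarrow> bool" where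
  "right_act A act \<longleftrightarrow>
     (\<forall>a\<in>A. \<forall>s. act a s \<in> A) \<and>
     (\<forall>a\<in>A. act a 1 = a) \<and>
     (\<forall>a\<in>A. \<forall>s t. act (act a s) t = act a (s * t))"

definition subact :: "'a set \<Rightarrow> ('a \<Rightarrow> 'm::monoid_mult \<Rightarrow> 'a) \<Rightarrow> 'a set \<Rightarrow> bool" where
  "subact A act B \<longleftrightarrow> B \<subseteq> A \<and> (\<forall>b\<in>B. \<forall>s. act b s \<in> B)"

definition act_congruence :: "'a set \<Rightarrow> ('a \<Rightarrow> 'm::monoid_mult \<Rightarrow> 'a) \<Rightarrow> ('a \<times> 'a) set \<Rightarrow> bool" where
  "act_congruence A act \<rho> \<longleftrightarrow> equiv A \<rho> \<and>
     (\<forall>a b s. (a, b) \<in> \<rho> \<longrightarrow> (act a s, act b s) \<in> \<rho>)"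

definition Delta :: "'a set \<Rightarrow> ('a \<times> 'a) set" where
  "Delta A = {(a, a) | a. a \<in> A}"

definition Nabla :: "'a set \<Rightarrow> ('a \<times> 'a) set" where
  "Nabla A = A \<times> A"

definition rees_cong :: "'a set \<Rightarrow> 'a set \<Rightarrow> ('a \<times> 'a) set" where
  "rees_cong A B = (B \<times> B) \<union> Delta A"

definition act_ker :: "'a set \<Rightarrow> ('a \<Rightarrow> 'b) \<Rightarrow> ('a \<times> 'a) set" where
  "act_ker A h = {(a, a'). a \<in> A \<and> a' \<in> A \<and> h a = h a'}"

definition cong_join :: "'a set \<Rightarrow> ('a \<Rightarrow> 'm::monoid_mult \<Rightarrow> 'a) \<Rightarrow> ('a \<times> 'a) set \<Rightarrow> ('a \<times> 'a) set \<Rightarrow> ('a \<times> 'a) set" where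
  "cong_join A act \<rho> \<sigma> = \<Inter> {\<tau>. act_congruence A act \<tau> \<and> \<rho> \<union> \<sigma> \<subseteq> \<tau>}"

definition act_endo :: "'a set \<Rightarrow> ('a \<Rightarrow> 'm::monoid_mult \<Rightarrow> 'a) \<Rightarrow> ('a \<Rightarrow> 'a) \<Rightarrow> bool" where
  "act_endo A act f \<longleftrightarrow> (\<forall>a\<in>A. f a \<in> A) \<and> (\<forall>a\<in>A. \<forall>s. f (act a s) = act (f a) s)"

definition act_noetherian :: "'a set \<Rightarrow> ('a \<Rightarrow> 'm::monoid_mult \<Rightarrow> 'a) \<Rightarrow> bool" where
  "act_noetherian A act \<longleftrightarrow>
     (\<forall>C :: nat \<Rightarrow> ('a \<times> 'a) set.
        (\<forall>i. act_congruence A act (C i)) \<and> (\<forall>i. C i \<subseteq> C (Suc i)) \<longrightarrow>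
        (\<exists>N. \<forall>i\<ge>N. C i = C N))"

definition act_rees_artinian :: "'a set \<Rightarrow> ('a \<Rightarrow> 'm::monoid_mult \<Rightarrow> 'a) \<Rightarrow> bool" where
  "act_rees_artinian A act \<longleftrightarrow>
     (\<forall>B :: nat \<Rightarrow> 'a set.
        (\<forall>i. subact A act (B i)) \<and> (\<forall>i. B (Suc i) \<subseteq> B i) \<longrightarrow>
        (\<exists>N. \<forall>i\<ge>N. B i = B N))"

end

theory Submission
  imports Defs
begin

lemma endo_pow:
  assumes "act_endo A act f"
  shows "act_endo A act (f ^^ n)"
  using assms by (induction n) (auto simp: act_endo_def)

lemma ker_cong:
  assumes "act_endo A act g" "right_act A act"
  shows "act_congruence A act (act_ker A g)"
  using assms unfolding act_congruence_def act_ker_def act_endo_def right_act_def equiv_def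
    refl_on_def sym_def trans_def by auto

lemma img_sub:
  assumes "act_endo A act g" "right_act A act"
  shows "subact A act (g ` A)"
  unfolding subact_def
proof (intro conjI ballI allI)
  show "g ` A \<subseteq> A" using assms(1) unfolding act_endo_def by auto
  fix b s assume "b \<in> g ` A"
  then obtain x where x: "x \<in> A" "b = g x" by auto
  then have "act b s = g (act x s)" using assms(1) unfolding act_endo_def by auto
  moreover have "act x s \<in> A" using x assms(2) unfolding right_act_def by auto
  ultimately show "act b s \<in> g ` A" by auto
qed

theorem mainTheorem11:
  fixes A :: "'a set" and act :: "'a \<Rightarrow> 'm::monoid_mult \<Rightarrow> 'a" and f :: "'a \<Rightarrow> 'a"
  assumes "right_act A act"
    and "act_noetherian A act"
    and "act_rees_artinian A act"
    and "act_endo A act f"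
  shows "\<exists>n::nat. n \<ge> 1 \<and>
           cong_join A act (act_ker A (f ^^ n)) (rees_cong A ((f ^^ n) ` A)) = Nabla A \<and>
           act_ker A (f ^^ n) \<inter> rees_cong A ((f ^^ n) ` A) = Delta A"
proof -
  have E: "\<And>i. act_endo A act (f ^^ i)" using endo_pow assms(4) by blast
  have inA: "\<And>i x. x \<in> A \<Longrightarrow> (f ^^ i) x \<in> A" using E unfolding act_endo_def by blast
  have c1: "\<forall>i. act_congruence A act (act_ker A (f ^^ i))" using ker_cong[OF E assms(1)] by simp
  have c2: "\<forall>i. act_ker A (f ^^ i) \<subseteq> act_ker A (f ^^ Suc i)"
    unfolding act_ker_def by auto
  obtain N1 where N1: "\<forall>i\<ge>N1. act_ker A (f ^^ i) = act_ker A (f ^^ N1)"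
    using assms(2)[unfolded act_noetherian_def, THEN spec[of _ "\<lambda>i. act_ker A (f ^^ i)"], THEN mp, OF conjI[OF c1 c2]] by blast
  have d1: "\<forall>i. subact A act ((f ^^ i) ` A)" using img_sub[OF E assms(1)] by simp
  have d2: "\<forall>i. (f ^^ Suc i) ` A \<subseteq> (f ^^ i) ` A"
  proof
    fix i show "(f ^^ Suc i) ` A \<subseteq> (f ^^ i) ` A"
    proof
      fix y assume "y \<in> (f ^^ Suc i) ` A"
      then obtain x where x: "x \<in> A" "y = (f ^^ Suc i) x" by blast
      have "f x \<in> A" using x(1) assms(4) unfolding act_endo_def by blast
      moreover have "y = (f ^^ i) (f x)" using x(2) by (simp only: funpow_Suc_right comp_def)
      ultimately show "y \<in> (f ^^ i) ` A" by blast
    qed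
  qed
  obtain N2 where N2: "\<forall>i\<ge>N2. (f ^^ i) ` A = (f ^^ N2) ` A"
    using assms(3)[unfolded act_rees_artinian_def, THEN spec[of _ "\<lambda>i. (f ^^ i) ` A"], THEN mp, OF conjI[OF d1 d2]] by blast
  define n where "n = Suc (N1 + N2)"
  have h: "n + n \<ge> N1" "n \<ge> N1" "n + n \<ge> N2" "n \<ge> N2" unfolding n_def by auto
  have Kq: "act_ker A (f ^^ (n+n)) = act_ker A (f ^^ n)"
    using N1[rule_format, OF h(1)] N1[rule_format, OF h(2)] by argo
  have Iq: "(f ^^ (n+n)) ` A = (f ^^ n) ` A"
    using N2[rule_format, OF h(3)] N2[rule_format, OF h(4)] by argo
  have K: "\<And>x y. x \<in> A \<Longrightarrow> y \<in> A \<Longrightarrow> (f ^^ n) ((f ^^ n) x) = (f ^^ n) ((f ^^ n) y)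
      \<Longrightarrow> (f ^^ n) x = (f ^^ n) y"
  proof -
    fix x y assume "x \<in> A" "y \<in> A" "(f ^^ n) ((f ^^ n) x) = (f ^^ n) ((f ^^ n) y)"
    then have "(x,y) \<in> act_ker A (f ^^ (n+n))" unfolding act_ker_def by (simp add: funpow_add)
    then show "(f ^^ n) x = (f ^^ n) y" using Kq unfolding act_ker_def by auto
  qed
  have I: "\<And>a. a \<in> A \<Longrightarrow> \<exists>y\<in>A. (f ^^ n) a = (f ^^ n) ((f ^^ n) y)"
  proof -
    fix a assume "a \<in> A"
    then have "(f ^^ n) a \<in> (f ^^ (n+n)) ` A" using Iq by blast
    then show "\<exists>y\<in>A. (f ^^ n) a = (f ^^ n) ((f ^^ n) y)" by (auto simp: funpow_add)
  qed
  have int: "act_ker A (f ^^ n) \<inter> rees_cong A ((f ^^ n) ` A) = Delta A"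
  proof
    show "act_ker A (f ^^ n) \<inter> rees_cong A ((f ^^ n) ` A) \<subseteq> Delta A"
    proof
      fix p assume p: "p \<in> act_ker A (f ^^ n) \<inter> rees_cong A ((f ^^ n) ` A)"
      obtain a b where ab: "p = (a,b)" by (cases p)
      show "p \<in> Delta A"
      proof (cases "p \<in> Delta A")
        case False
        then obtain x y where "x \<in> A" "y \<in> A" "a = (f ^^ n) x" "b = (f ^^ n) y"
          using p ab unfolding rees_cong_def by auto
        moreover have "(f ^^ n) a = (f ^^ n) b" using p ab unfolding act_ker_def by auto
        ultimately have "a = b" using K by auto
        then show ?thesis using p ab unfolding act_ker_def Delta_def by auto
      qed
    qed
    show "Delta A \<subseteq> act_ker A (f ^^ n) \<inter> rees_cong A ((f ^^ n) ` A)"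
      unfolding Delta_def act_ker_def rees_cong_def by auto
  qed
  have NC: "act_congruence A act (Nabla A)"
    using assms(1) unfolding Nabla_def act_congruence_def equiv_def refl_on_def sym_def trans_def
      right_act_def by blast
  have NS: "act_ker A (f ^^ n) \<union> rees_cong A ((f ^^ n) ` A) \<subseteq> Nabla A"
    using inA unfolding Nabla_def act_ker_def rees_cong_def Delta_def by blast
  have "Nabla A \<in> {\<tau>. act_congruence A act \<tau> \<and> act_ker A (f ^^ n) \<union> rees_cong A ((f ^^ n) ` A) \<subseteq> \<tau>}"
    using NC NS by blast
  then have j1: "cong_join A act (act_ker A (f ^^ n)) (rees_cong A ((f ^^ n) ` A)) \<subseteq> Nabla A"
    unfolding cong_join_def by blast
  have j2: "Nabla A \<subseteq> \<tau>" if t: "act_congruence A act \<tau>"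
       "act_ker A (f ^^ n) \<union> rees_cong A ((f ^^ n) ` A) \<subseteq> \<tau>" for \<tau>
  proof
    fix p assume "p \<in> Nabla A"
    then obtain a b where ab: "p = (a,b)" "a \<in> A" "b \<in> A" unfolding Nabla_def by auto
    obtain x where x: "x \<in> A" "(f ^^ n) a = (f ^^ n) ((f ^^ n) x)" using I ab by blast
    obtain y where y: "y \<in> A" "(f ^^ n) b = (f ^^ n) ((f ^^ n) y)" using I ab by blast
    have 1: "(a, (f ^^ n) x) \<in> \<tau>" using t(2) x ab inA unfolding act_ker_def by auto
    have 2: "(b, (f ^^ n) y) \<in> \<tau>" using t(2) y ab inA unfolding act_ker_def by auto
    have 3: "((f ^^ n) x, (f ^^ n) y) \<in> \<tau>" using t(2) x y unfolding rees_cong_def by auto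
    have "equiv A \<tau>" using t(1) unfolding act_congruence_def by blast
    then have "sym \<tau>" "trans \<tau>" unfolding equiv_def by auto
    then show "p \<in> \<tau>" using 1 2 3 ab unfolding sym_def trans_def by metis
  qed
  have "cong_join A act (act_ker A (f ^^ n)) (rees_cong A ((f ^^ n) ` A)) = Nabla A"
    using j1 j2 unfolding cong_join_def by blast
  moreover have "n \<ge> 1" unfolding n_def by simp
  ultimately show ?thesis using int by blast
qed

end
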